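(* If a polynomial $f \in \mathbb{N}_0[x^{\pm 1}]$ is hyper-monolithic, then $f$ is monolithic.
   Context: $\mathbb{N}_0[x^{\pm 1}]$ denotes the semiring of Laurent polynomials in $x$ with nonnegative integer coefficients; $\operatorname{supp}(f)$ is the set of exponents occurring in $f$ with nonzero coefficient. A nonzero $f$ is monolithic if whenever $f = gh$ with $g,h \in \mathbb{N}_0[x^{\pm 1}]$, one of $g, h$ is a monomial $c x^k$ ($c$ a positive integer, $k\in\mathbb{Z}$). Writing $f = \sum_{i=0}^{n} c_i x^{k_i}$ with $c_i$ positive integers and $k_0 > \cdots > k_n$, $f$ is hyper-monolithic if $|\operatorname{supp}(f)| > 1$ and either $k_0 - k_1 < k_i - k_{i+1}$ for every $i \in \{1,\ldots,n-1\}$, or $k_{n-1} - k_n < k_j - k_{j+1}$ for every $j \in \{0,\ldots,n-2\}$. *)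

theory Defs
  imports Main "HOL-Library.Poly_Mapping"
begin

text \<open>Laurent polynomials in x with nonnegative integer coefficients, N_0[x^{+-1}],
  are modelled as finitely supported maps from exponents (int) to coefficients (nat),
  i.e. the type int =>0 nat; its multiplication is the convolution product
  of Poly_Mapping (monoid algebra of the additive group int).\<close>

type_synonym lpoly = "int \<Rightarrow>\<^sub>0 nat"

definition is_monomial :: "lpoly \<Rightarrow> bool" where
  "is_monomial g \<longleftrightarrow> (\<exists>c k. c > 0 \<and> g = Poly_Mapping.single k c)"

definition monolithic :: "lpoly \<Rightarrow> bool" where
  "monolithic f \<longleftrightarrow> f \<noteq> 0 \<and>
     (\<forall>g h. f = g * h \<longrightarrow> is_monomial g \<or> is_monomial h)"

definition exps :: "lpoly \<Rightarrow> int list" where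
  "exps f = rev (sorted_list_of_set (Poly_Mapping.keys f))"

definition hyper_monolithic :: "lpoly \<Rightarrow> bool" where
  "hyper_monolithic f \<longleftrightarrow>
     (let ks = exps f; n = length ks - 1 in
      card (Poly_Mapping.keys f) > 1 \<and>
      ((\<forall>i. 1 \<le> i \<and> i \<le> n - 1 \<longrightarrow> ks!0 - ks!1 < ks!i - ks!(i+1)) \<or>
       (\<forall>j. j + 2 \<le> n \<longrightarrow> ks!(n-1) - ks!n < ks!j - ks!(j+1))))"

end

theory Submission
  imports Defs
begin

lemma keys_mult_nat:
  fixes g h :: lpoly
  shows "Poly_Mapping.keys (g * h) = {a + b | a b. a \<in> Poly_Mapping.keys g \<and> b \<in> Poly_Mapping.keys h}"
proof
  show "Poly_Mapping.keys (g * h) \<subseteq> {a + b | a b. a \<in> Poly_Mapping.keys g \<and> b \<in> Poly_Mapping.keys h}"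
    by (rule keys_mult)
next
  show "{a + b | a b. a \<in> Poly_Mapping.keys g \<and> b \<in> Poly_Mapping.keys h} \<subseteq> Poly_Mapping.keys (g * h)"
  proof clarify
    fix a b assume a: "a \<in> Poly_Mapping.keys g" and b: "b \<in> Poly_Mapping.keys h"
    define ca :: nat where "ca = Poly_Mapping.lookup g a"
    define cb :: nat where "cb = Poly_Mapping.lookup h b"
    define g' where "g' = g - Poly_Mapping.single a ca"
    define h' where "h' = h - Poly_Mapping.single b cb"
    have ca: "ca > 0" using a by (simp add: ca_def in_keys_iff)
    have cb: "cb > 0" using b by (simp add: cb_def in_keys_iff)
    have g: "g = Poly_Mapping.single a ca + g'"
      by (rule poly_mapping_eqI) (simp add: g'_def ca_def lookup_add lookup_minus lookup_single when_def)
    have h: "h = Poly_Mapping.single b cb + h'"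
      by (rule poly_mapping_eqI) (simp add: h'_def cb_def lookup_add lookup_minus lookup_single when_def)
    have e1: "g * h = (Poly_Mapping.single a ca + g') * (Poly_Mapping.single b cb + h')"
      using g h by simp
    have "(Poly_Mapping.single a ca + g') * (Poly_Mapping.single b cb + h') = Poly_Mapping.single (a + b) (ca * cb) + (Poly_Mapping.single a ca * h' + g' * (Poly_Mapping.single b cb + h'))"
      by (simp add: algebra_simps mult_single)
    then have "g * h = Poly_Mapping.single (a + b) (ca * cb) + (Poly_Mapping.single a ca * h' + g' * (Poly_Mapping.single b cb + h'))"
      using e1 by simp
    then have "Poly_Mapping.lookup (g * h) (a + b) \<ge> ca * cb"
      by (simp add: lookup_add)
    moreover have "ca * cb > 0" using ca cb by simp
    ultimately have "Poly_Mapping.lookup (g * h) (a + b) > 0"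
      by (meson less_le_trans)
    then show "a + b \<in> Poly_Mapping.keys (g * h)"
      by (simp add: in_keys_iff)
  qed
qed

lemma top2:
  fixes A :: "int set"
  assumes "finite A" "card A \<ge> 2"
  shows "\<exists>a0 a1. a0 \<in> A \<and> a1 \<in> A \<and> a1 < a0 \<and> (\<forall>a\<in>A. a \<le> a0) \<and> (\<forall>a\<in>A. a \<noteq> a0 \<longrightarrow> a \<le> a1)"
proof -
  have ne: "A \<noteq> {}" using assms by auto
  define a0 where "a0 = Max A"
  have a0: "a0 \<in> A" "\<forall>a\<in>A. a \<le> a0" using assms ne by (auto simp: a0_def)
  have "card (A - {a0}) \<ge> 1" using assms a0 by simp
  then have ne2: "A - {a0} \<noteq> {}" by (metis card.empty not_one_le_zero)
  define a1 where "a1 = Max (A - {a0})"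
  have fin2: "finite (A - {a0})" using assms by simp
  have a1: "a1 \<in> A - {a0}" "\<forall>a\<in>A - {a0}. a \<le> a1"
    unfolding a1_def using Max_in[OF fin2 ne2] Max_ge[OF fin2] by auto
  have "a1 < a0" using a1 a0 by force
  then show ?thesis using a0 a1 by blast
qed

lemma consec:
  fixes S :: "int set"
  assumes "finite S" "u \<in> S" "v' \<in> S" "u < v'"
  shows "\<exists>v\<in>S. u < v \<and> v \<le> v' \<and> (\<forall>s\<in>S. \<not> (u < s \<and> s < v))"
proof -
  let ?T = "{s\<in>S. u < s}"
  have ne: "?T \<noteq> {}" using assms by auto
  have fin: "finite ?T" using assms by simp
  define v where "v = Min ?T"
  have "v \<in> ?T" unfolding v_def by (rule Min_in[OF fin ne])
  moreover have "\<forall>s\<in>?T. v \<le> s" using ne fin by (simp add: v_def)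
  ultimately show ?thesis using assms by force
qed

lemma top_gap:
  fixes A B S :: "int set"
  assumes fA: "finite A" and fB: "finite B" and cA: "card A \<ge> 2" and cB: "card B \<ge> 2"
    and S: "S = {a + b | a b. a \<in> A \<and> b \<in> B}"
    and k0: "k0 \<in> S" and k1: "k1 \<in> S" and k10: "k1 < k0"
    and mx: "\<forall>s\<in>S. s \<le> k0" and mx2: "\<forall>s\<in>S. s \<noteq> k0 \<longrightarrow> s \<le> k1"
  shows "\<exists>u v. u \<in> S \<and> v \<in> S \<and> u < v \<and> (\<forall>s\<in>S. \<not> (u < s \<and> s < v)) \<and> u < k1 \<and> v - u \<le> k0 - k1"
proof -
  obtain a0 a1 where A: "a0 \<in> A" "a1 \<in> A" "a1 < a0" "\<forall>a\<in>A. a \<le> a0" "\<forall>a\<in>A. a \<noteq> a0 \<longrightarrow> a \<le> a1"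
    using top2[OF fA cA] by blast
  obtain b0 b1 where B: "b0 \<in> B" "b1 \<in> B" "b1 < b0" "\<forall>b\<in>B. b \<le> b0" "\<forall>b\<in>B. b \<noteq> b0 \<longrightarrow> b \<le> b1"
    using top2[OF fB cB] by blast
  have neA: "A \<noteq> {}" "B \<noteq> {}" using A B by auto
  define am where "am = Min A"
  define bm where "bm = Min B"
  have am: "am \<in> A" "\<forall>a\<in>A. am \<le> a" using fA neA by (auto simp: am_def)
  have bm: "bm \<in> B" "\<forall>b\<in>B. bm \<le> b" using fB neA by (auto simp: bm_def)
  have finS: "finite S" using fA fB S by (simp add: finite_image_set2)
  have inS: "\<And>a b. a \<in> A \<Longrightarrow> b \<in> B \<Longrightarrow> a + b \<in> S" using S by blast
  have "a0 + b0 \<le> k0" using mx inS A B by blast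
  moreover have "k0 \<le> a0 + b0" using k0 S A B by (force intro: add_mono)
  ultimately have k0e: "k0 = a0 + b0" by simp
  have l1: "a0 + b1 \<le> k1" using mx2 inS[OF A(1) B(2)] B(3) k0e by force
  have l2: "a1 + b0 \<le> k1" using mx2 inS[OF A(2) B(1)] A(3) k0e by force
  have u: "k1 \<le> a0 + b1 \<or> k1 \<le> a1 + b0"
  proof -
    obtain a b where ab: "a \<in> A" "b \<in> B" "k1 = a + b" using k1 S by blast
    show ?thesis
    proof (cases "a = a0")
      case True
      then have "b \<noteq> b0" using ab k0e k10 by auto
      then have "b \<le> b1" using B ab by blast
      then show ?thesis using ab True by simp
    next
      case False
      then have "a \<le> a1" using A ab by blast
      then show ?thesis using ab B(4) by force
    qed
  qed
  obtain u' v' where uv: "u' \<in> S" "v' \<in> S" "u' < v'" "u' < k1" "v' - u' \<le> k0 - k1"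
  proof (cases "a1 + b0 \<le> a0 + b1")
    case True
    then have "k1 = a0 + b1" using l1 l2 u by linarith
    moreover have "am \<le> a1" using am A by blast
    ultimately show ?thesis using that[of "am + b1" "am + b0"] inS am B k0e l2 by force
  next
    case False
    then have "k1 = a1 + b0" using l1 l2 u by linarith
    moreover have "bm \<le> b1" using bm B by blast
    ultimately show ?thesis using that[of "a1 + bm" "a0 + bm"] inS bm A k0e l1 False by force
  qed
  obtain v where "v \<in> S" "u' < v" "v \<le> v'" "\<forall>s\<in>S. \<not> (u' < s \<and> s < v)"
    using consec[OF finS uv(1,2,3)] by blast
  then show ?thesis using uv by (intro exI[of _ u'] exI[of _ v]) auto
qed

lemma bottom_gap:
  fixes A B S :: "int set"
  assumes fA: "finite A" and fB: "finite B" and cA: "card A \<ge> 2" and cB: "card B \<ge> 2"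
    and S: "S = {a + b | a b. a \<in> A \<and> b \<in> B}"
    and k0: "k0 \<in> S" and k1: "k1 \<in> S" and k10: "k0 < k1"
    and mn: "\<forall>s\<in>S. k0 \<le> s" and mn2: "\<forall>s\<in>S. s \<noteq> k0 \<longrightarrow> k1 \<le> s"
  shows "\<exists>u v. u \<in> S \<and> v \<in> S \<and> u < v \<and> (\<forall>s\<in>S. \<not> (u < s \<and> s < v)) \<and> k1 < v \<and> v - u \<le> k1 - k0"
proof -
  have cardA: "card (uminus ` A) = card A" by (rule card_image) (simp add: inj_on_def)
  have cardB: "card (uminus ` B) = card B" by (rule card_image) (simp add: inj_on_def)
  have S': "uminus ` S = {a + b | a b. a \<in> uminus ` A \<and> b \<in> uminus ` B}"
  proof
    show "uminus ` S \<subseteq> {a + b | a b. a \<in> uminus ` A \<and> b \<in> uminus ` B}"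
    proof
      fix x assume "x \<in> uminus ` S"
      then obtain a b where "a \<in> A" "b \<in> B" "x = - (a + b)" using S by blast
      then have "x = (- a) + (- b)" "- a \<in> uminus ` A" "- b \<in> uminus ` B" by auto
      then show "x \<in> {a + b | a b. a \<in> uminus ` A \<and> b \<in> uminus ` B}" by blast
    qed
    show "{a + b | a b. a \<in> uminus ` A \<and> b \<in> uminus ` B} \<subseteq> uminus ` S"
    proof
      fix x assume "x \<in> {a + b | a b. a \<in> uminus ` A \<and> b \<in> uminus ` B}"
      then obtain a b where "a \<in> A" "b \<in> B" "x = - a + - b" by blast
      moreover have "a + b \<in> S" using S \<open>a \<in> A\<close> \<open>b \<in> B\<close> by blast
      ultimately show "x \<in> uminus ` S" by (metis image_eqI minus_add_distrib)
    qed
  qed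
  have "\<exists>u v. u \<in> uminus ` S \<and> v \<in> uminus ` S \<and> u < v \<and> (\<forall>s\<in>uminus ` S. \<not> (u < s \<and> s < v)) \<and> u < - k1 \<and> v - u \<le> - k0 - - k1"
  proof (rule top_gap[OF _ _ _ _ S'])
    show "finite (uminus ` A)" "finite (uminus ` B)" using fA fB by simp_all
    show "2 \<le> card (uminus ` A)" "2 \<le> card (uminus ` B)" using cardA cardB cA cB by simp_all
    show "- k0 \<in> uminus ` S" "- k1 \<in> uminus ` S" using k0 k1 by simp_all
    show "- k1 < - k0" using k10 by simp
    show "\<forall>s\<in>uminus ` S. s \<le> - k0" using mn by auto
    show "\<forall>s\<in>uminus ` S. s \<noteq> - k0 \<longrightarrow> s \<le> - k1" using mn2 by auto
  qed
  then obtain u v where uv: "u \<in> uminus ` S" "v \<in> uminus ` S" "u < v" "\<forall>s\<in>uminus ` S. \<not> (u < s \<and> s < v)" "u < - k1" "v - u \<le> - k0 - - k1"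
    by blast
  have a: "- v \<in> S" "- u \<in> S" using uv by auto
  have b: "\<forall>s\<in>S. \<not> (- v < s \<and> s < - u)"
  proof
    fix s assume "s \<in> S"
    then have "- s \<in> uminus ` S" by blast
    then have "\<not> (u < - s \<and> - s < v)" using uv(4) by blast
    then show "\<not> (- v < s \<and> s < - u)" by linarith
  qed
  have "- v < - u" "k1 < - u" "- u - - v \<le> k1 - k0" using uv by linarith+
  then show ?thesis using a b by blast
qed

lemma monomial_iff:
  fixes g :: lpoly
  assumes "g \<noteq> 0" "\<not> is_monomial g"
  shows "card (Poly_Mapping.keys g) \<ge> 2"
proof (rule ccontr)
  assume "\<not> ?thesis"
  moreover have "Poly_Mapping.keys g \<noteq> {}" using assms by simp
  moreover have "finite (Poly_Mapping.keys g)" by simp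
  ultimately have "card (Poly_Mapping.keys g) = 1"
    by (metis One_nat_def Suc_leI card_gt_0_iff le_antisym not_less_eq_eq numeral_2_eq_2)
  then obtain k where k: "Poly_Mapping.keys g = {k}" by (auto simp: card_Suc_eq)
  have "g = Poly_Mapping.single k (Poly_Mapping.lookup g k)"
    by (rule poly_mapping_eqI) (metis k in_keys_iff lookup_single_eq lookup_single_not_eq singletonI singletonD)
  moreover have "Poly_Mapping.lookup g k > 0" using k by (metis in_keys_iff insertI1 neq0_conv)
  ultimately show False using assms(2) unfolding is_monomial_def by blast
qed

theorem lemma2p6:
  fixes f :: lpoly
  assumes "hyper_monolithic f"
  shows "monolithic f"
proof -
  define K where "K = Poly_Mapping.keys f"
  define ks where "ks = exps f"
  define N where "N = length ks"
  define n where "n = N - 1"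
  have finK: "finite K" unfolding K_def by simp
  have hm: "card K > 1"
    and cond: "(\<forall>i. 1 \<le> i \<and> i \<le> n - 1 \<longrightarrow> ks!0 - ks!1 < ks!i - ks!(i+1)) \<or>
       (\<forall>j. j + 2 \<le> n \<longrightarrow> ks!(n-1) - ks!n < ks!j - ks!(j+1))"
    using assms unfolding hyper_monolithic_def Let_def K_def ks_def n_def N_def by auto
  have setks: "set ks = K" unfolding ks_def exps_def K_def by simp
  have NK: "N = card K" unfolding N_def ks_def exps_def K_def by simp
  have N2: "N \<ge> 2" using hm NK by simp
  have srt: "sorted_wrt (>) ks" unfolding ks_def exps_def
    using strict_sorted_list_of_set by (simp add: sorted_wrt_rev)
  have lt: "\<And>i j. i < j \<Longrightarrow> j < N \<Longrightarrow> ks!j < ks!i"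
    using srt N_def sorted_wrt_nth_less by fastforce
  have le: "\<And>i j. i \<le> j \<Longrightarrow> j < N \<Longrightarrow> ks!j \<le> ks!i"
    using lt by (metis le_less order.refl)
  have mem: "\<And>i. i < N \<Longrightarrow> ks!i \<in> K" using setks N_def by auto
  have idx: "\<And>s. s \<in> K \<Longrightarrow> \<exists>i<N. ks!i = s" using setks N_def by (auto simp: in_set_conv_nth)
  have consec: "\<exists>i. i + 1 < N \<and> ks!i = v \<and> ks!(i+1) = u"
    if uvh: "u \<in> K" "v \<in> K" "u < v" "\<forall>s\<in>K. \<not> (u < s \<and> s < v)" for u v
  proof -
    obtain j where j: "j < N" "ks!j = u" using idx uvh by blast
    obtain i where i: "i < N" "ks!i = v" using idx uvh by blast
    have ij: "i < j" using le[of j i] i j uvh by force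
    have "j = i + 1"
    proof (rule ccontr)
      assume "j \<noteq> i + 1"
      then have "i + 1 < j" using ij by simp
      then have "ks!j < ks!(i+1)" "ks!(i+1) < ks!i" using lt j by auto
      then show False using uvh mem[of "i+1"] i j \<open>i + 1 < j\<close> by auto
    qed
    then show ?thesis using i j by auto
  qed
  have f0: "f \<noteq> 0" using hm K_def by auto
  show ?thesis unfolding monolithic_def
  proof (intro conjI allI impI f0)
    fix g h assume fgh: "f = g * h"
    show "is_monomial g \<or> is_monomial h"
    proof (rule ccontr)
      assume nm: "\<not> (is_monomial g \<or> is_monomial h)"
      have "g \<noteq> 0" "h \<noteq> 0" using f0 fgh by auto
      then have cg: "card (Poly_Mapping.keys g) \<ge> 2" and ch: "card (Poly_Mapping.keys h) \<ge> 2"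
        using monomial_iff nm by auto
      have S: "K = {a + b | a b. a \<in> Poly_Mapping.keys g \<and> b \<in> Poly_Mapping.keys h}"
        unfolding K_def fgh by (rule keys_mult_nat)
      show False
      proof (cases "\<forall>i. 1 \<le> i \<and> i \<le> n - 1 \<longrightarrow> ks!0 - ks!1 < ks!i - ks!(i+1)")
        case True
        have "\<exists>u v. u \<in> K \<and> v \<in> K \<and> u < v \<and> (\<forall>s\<in>K. \<not> (u < s \<and> s < v)) \<and> u < ks!1 \<and> v - u \<le> ks!0 - ks!1"
        proof (rule top_gap[OF _ _ cg ch S])
          show "ks!0 \<in> K" "ks!1 \<in> K" "ks!1 < ks!0" using mem[of 0] mem[of 1] lt[of 0 1] N2 by auto
          show "\<forall>s\<in>K. s \<le> ks!0"
          proof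
            fix s assume "s \<in> K"
            then obtain i where "i < N" "ks!i = s" using idx by blast
            then show "s \<le> ks!0" using le[of 0 i] by simp
          qed
          show "\<forall>s\<in>K. s \<noteq> ks!0 \<longrightarrow> s \<le> ks!1"
          proof (intro ballI impI)
            fix s assume "s \<in> K" "s \<noteq> ks!0"
            then obtain i where i1: "i < N" "ks!i = s" using idx by blast
            have i2: "1 \<le> i" using i1 \<open>s \<noteq> ks!0\<close> by (cases i) auto
            show "s \<le> ks!1" using le[OF i2 i1(1)] i1(2) by simp
          qed
        qed simp_all
        then obtain u v where uv: "u \<in> K" "v \<in> K" "u < v" "\<forall>s\<in>K. \<not> (u < s \<and> s < v)" "u < ks!1" "v - u \<le> ks!0 - ks!1"
          by blast
        obtain i where i: "i + 1 < N" "ks!i = v" "ks!(i+1) = u" using consec[OF uv(1-4)] by blast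
        have "i + 1 > 1"
        proof (rule ccontr)
          assume "\<not> i + 1 > 1"
          then have "i = 0" by simp
          then have "u = ks!1" using i by simp
          then show False using uv(5) by simp
        qed
        then have "1 \<le> i \<and> i \<le> n - 1" using i n_def by simp
        then have "ks!0 - ks!1 < ks!i - ks!(i+1)" using True by simp
        then show False using i uv by linarith
      next
        case False
        then have C: "\<forall>j. j + 2 \<le> n \<longrightarrow> ks!(n-1) - ks!n < ks!j - ks!(j+1)" using cond by blast
        have "\<exists>u v. u \<in> K \<and> v \<in> K \<and> u < v \<and> (\<forall>s\<in>K. \<not> (u < s \<and> s < v)) \<and> ks!(n-1) < v \<and> v - u \<le> ks!(n-1) - ks!n"
        proof (rule bottom_gap[OF _ _ cg ch S])
          show "ks!n \<in> K" "ks!(n-1) \<in> K" "ks!n < ks!(n-1)" using mem[of n] mem[of "n-1"] lt[of "n-1" n] N2 n_def by auto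
          show "\<forall>s\<in>K. ks!n \<le> s"
          proof
            fix s assume "s \<in> K"
            then obtain i where "i < N" "ks!i = s" using idx by blast
            then show "ks!n \<le> s" using le[of i n] n_def N2 by simp
          qed
          show "\<forall>s\<in>K. s \<noteq> ks!n \<longrightarrow> ks!(n-1) \<le> s"
          proof (intro ballI impI)
            fix s assume "s \<in> K" "s \<noteq> ks!n"
            then obtain i where i1: "i < N" "ks!i = s" using idx by blast
            have i2: "i \<le> n - 1" using i1 \<open>s \<noteq> ks!n\<close> n_def by (cases "i = n") auto
            have i3: "n - 1 < N" using n_def N2 by simp
            show "ks!(n-1) \<le> s" using le[OF i2 i3] i1(2) by simp
          qed
        qed simp_all
        then obtain u v where uv: "u \<in> K" "v \<in> K" "u < v" "\<forall>s\<in>K. \<not> (u < s \<and> s < v)" "ks!(n-1) < v" "v - u \<le> ks!(n-1) - ks!n"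
          by blast
        obtain i where i: "i + 1 < N" "ks!i = v" "ks!(i+1) = u" using consec[OF uv(1-4)] by blast
        have "i + 2 \<le> n"
        proof (rule ccontr)
          assume "\<not> i + 2 \<le> n"
          then have "n - 1 \<le> i" "i < N" using i n_def by auto
          then have "ks!i \<le> ks!(n-1)" using le[of "n-1" i] by blast
          then show False using i uv by simp
        qed
        then have "ks!(n-1) - ks!n < ks!i - ks!(i+1)" using C by blast
        then show False using i uv by linarith
      qed
    qed
  qed
qed

end
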